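(* Let $g\colon[0,1]\to[0,1]$ be a surjection whose graph $\Gamma=\{(x,g(x))\colon x\in[0,1]\}\subseteq[0,1]^2$ (with the subspace topology of the plane) is connected. Define $f\colon\Gamma\to[0,1]$ by $f(x,g(x))=g(x)$. Then $f$ is a continuous quotient surjection of $\Gamma$ onto $[0,1]$.
   Context: A surjection $f\colon X\to Y$ is a quotient map if for every $G\subseteq Y$, $G$ is open in $Y$ iff $f^{-1}(G)$ is open in $X$. *)

theory Defs
  imports "HOL-Analysis.Analysis"
begin

end

theory Submission
  imports Defs
begin

lemma darboux_graph:
  fixes g :: "real \<Rightarrow> real"
  assumes conn: "connected ((\<lambda>x. (x, g x)) ` {0..1})" and ab: "0 \<le> a" "a < b" "b \<le> 1"
    and c: "(g a < c \<and> c < g b) \<or> (g b < c \<and> c < g a)"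
  shows "\<exists>x\<in>{a..b}. g x = c"
proof (rule ccontr)
  assume nx: "\<not> ?thesis"
  from c show False
  proof
    assume h: "g a < c \<and> c < g b"
    let ?P1 = "{p::real\<times>real. fst p < a \<or> (fst p < b \<and> snd p < c)}"
    let ?P2 = "{p::real\<times>real. b < fst p \<or> (a < fst p \<and> c < snd p)}"
    have o1: "open ?P1" by (intro open_Collect_disj open_Collect_conj open_Collect_less continuous_intros)
    have o2: "open ?P2" by (intro open_Collect_disj open_Collect_conj open_Collect_less continuous_intros)
    have d: "?P1 \<inter> ?P2 \<inter> (\<lambda>x. (x, g x)) ` {0..1} = {}" using ab by auto
    have cv: "(\<lambda>x. (x, g x)) ` {0..1} \<subseteq> ?P1 \<union> ?P2"
    proof
      fix p assume "p \<in> (\<lambda>x. (x, g x)) ` {0..1}"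
      then obtain x where x: "x \<in> {0..1}" "p = (x, g x)" by auto
      show "p \<in> ?P1 \<union> ?P2"
      proof (cases "x < a \<or> b < x")
        case True then show ?thesis using x by auto
      next
        case False
        then have "x \<in> {a..b}" by auto
        then have "g x \<noteq> c" using nx by auto
        then show ?thesis using x h False ab
          by (cases "x = a"; cases "x = b"; auto)
      qed
    qed
    have n1: "?P1 \<inter> (\<lambda>x. (x, g x)) ` {0..1} \<noteq> {}"
    proof -
      have "(a, g a) \<in> ?P1 \<inter> (\<lambda>x. (x, g x)) ` {0..1}" using h ab by auto
      then show ?thesis by blast
    qed
    have n2: "?P2 \<inter> (\<lambda>x. (x, g x)) ` {0..1} \<noteq> {}"
    proof -
      have "(b, g b) \<in> ?P2 \<inter> (\<lambda>x. (x, g x)) ` {0..1}" using h ab by auto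
      then show ?thesis by blast
    qed
    show False using connectedD[OF conn o1 o2 d cv] n1 n2 by blast
  next
    assume h: "g b < c \<and> c < g a"
    let ?P1 = "{p::real\<times>real. fst p < a \<or> (fst p < b \<and> c < snd p)}"
    let ?P2 = "{p::real\<times>real. b < fst p \<or> (a < fst p \<and> snd p < c)}"
    have o1: "open ?P1" by (intro open_Collect_disj open_Collect_conj open_Collect_less continuous_intros)
    have o2: "open ?P2" by (intro open_Collect_disj open_Collect_conj open_Collect_less continuous_intros)
    have d: "?P1 \<inter> ?P2 \<inter> (\<lambda>x. (x, g x)) ` {0..1} = {}" using ab by auto
    have cv: "(\<lambda>x. (x, g x)) ` {0..1} \<subseteq> ?P1 \<union> ?P2"
    proof
      fix p assume "p \<in> (\<lambda>x. (x, g x)) ` {0..1}"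
      then obtain x where x: "x \<in> {0..1}" "p = (x, g x)" by auto
      show "p \<in> ?P1 \<union> ?P2"
      proof (cases "x < a \<or> b < x")
        case True then show ?thesis using x by auto
      next
        case False
        then have "x \<in> {a..b}" by auto
        then have "g x \<noteq> c" using nx by auto
        then show ?thesis using x h False ab
          by (cases "x = a"; cases "x = b"; auto)
      qed
    qed
    have n1: "?P1 \<inter> (\<lambda>x. (x, g x)) ` {0..1} \<noteq> {}"
    proof -
      have "(a, g a) \<in> ?P1 \<inter> (\<lambda>x. (x, g x)) ` {0..1}" using h ab by auto
      then show ?thesis by blast
    qed
    have n2: "?P2 \<inter> (\<lambda>x. (x, g x)) ` {0..1} \<noteq> {}"
    proof -
      have "(b, g b) \<in> ?P2 \<inter> (\<lambda>x. (x, g x)) ` {0..1}" using h ab by auto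
      then show ?thesis by blast
    qed
    show False using connectedD[OF conn o1 o2 d cv] n1 n2 by blast
  qed
qed

lemma darboux2:
  fixes g :: "real \<Rightarrow> real"
  assumes conn: "connected ((\<lambda>x. (x, g x)) ` {0..1})"
    and ab: "a \<in> {0..1}" "b \<in> {0..1}"
    and c: "(g a < c \<and> c < g b) \<or> (g b < c \<and> c < g a)"
  shows "\<exists>x. g x = c \<and> \<bar>x - b\<bar> \<le> \<bar>a - b\<bar> \<and> \<bar>x - a\<bar> \<le> \<bar>a - b\<bar>"
proof (cases "a < b")
  case True
  from darboux_graph[OF conn _ True _ c] ab obtain x where "x \<in> {a..b}" "g x = c" by auto
  then show ?thesis by auto
next
  case False
  then have "a \<noteq> b" using c by auto
  with False have "b < a" by auto
  have "\<exists>x\<in>{b..a}. g x = c" using darboux_graph[OF conn _ \<open>b < a\<close>, of c] c ab by auto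
  then obtain x where "x \<in> {b..a}" "g x = c" by auto
  then show ?thesis by auto
qed


lemma core_below:
  fixes g :: "real \<Rightarrow> real"
  assumes conn: "connected ((\<lambda>x. (x, g x)) ` {0..1})"
    and surj: "g ` {0..1} = {0..1}"
    and G: "G \<subseteq> {0..1}" "y \<in> G"
    and hU: "\<forall>x0\<in>{0..1}. g x0 \<in> G \<longrightarrow> (\<exists>d>0. \<forall>x\<in>{0..1}. \<bar>x-x0\<bar> < d \<and> \<bar>g x - g x0\<bar> < d \<longrightarrow> g x \<in> G)"
    and acc: "\<forall>e>0. \<exists>y'\<in>{0..1}. y-e < y' \<and> y' < y \<and> y' \<notin> G"
  shows False
proof -
  have "\<forall>x0\<in>{0..1} \<inter> g -` {y}. \<exists>d>0. \<forall>x\<in>{0..1}. \<bar>x-x0\<bar> < d \<longrightarrow> y \<le> g x"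
  proof
    fix x0 assume x0: "x0 \<in> {0..1} \<inter> g -` {y}"
    then obtain d where d: "d > 0" "\<forall>x\<in>{0..1}. \<bar>x-x0\<bar> < d \<and> \<bar>g x - g x0\<bar> < d \<longrightarrow> g x \<in> G"
      using hU G by auto
    have "\<forall>x\<in>{0..1}. \<bar>x-x0\<bar> < d \<longrightarrow> y \<le> g x"
    proof (intro ballI impI, rule ccontr)
      fix x assume x: "x \<in> {0..1}" "\<bar>x-x0\<bar> < d" "\<not> y \<le> g x"
      then obtain y' where y': "y' \<in> {0..1}" "y - min d (y - g x) < y'" "y' < y" "y' \<notin> G"
        using acc[rule_format, of "min d (y - g x)"] d by auto
      have "(g x < y' \<and> y' < g x0) \<or> (g x0 < y' \<and> y' < g x)" using x0 y' by auto
      then obtain z where z: "g z = y'" "\<bar>z - x0\<bar> \<le> \<bar>x - x0\<bar>" "\<bar>z - x\<bar> \<le> \<bar>x - x0\<bar>"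
        using darboux2[OF conn x(1), of x0] x0 by auto
      have "z \<in> {0..1}" using z x x0 by auto
      then have "g z \<in> G" using d(2) z x x0 y' by auto
      then show False using z y' by auto
    qed
    then show "\<exists>d>0. \<forall>x\<in>{0..1}. \<bar>x-x0\<bar> < d \<longrightarrow> y \<le> g x" using d by blast
  qed
  then obtain D where D: "\<forall>x0\<in>{0..1} \<inter> g -` {y}. D x0 > 0 \<and> (\<forall>x\<in>{0..1}. \<bar>x-x0\<bar> < D x0 \<longrightarrow> y \<le> g x)"
    by metis
  let ?O1 = "{p::real\<times>real. snd p < y}"
  let ?O2 = "{p::real\<times>real. y < snd p} \<union> (\<Union>x0\<in>{0..1} \<inter> g -` {y}. {p. \<bar>fst p - x0\<bar> < D x0})"
  have o1: "open ?O1" by (intro open_Collect_less continuous_intros)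
  have o2: "open ?O2"
    by (intro open_Un open_UN ballI open_Collect_less continuous_intros)
  have d: "?O1 \<inter> ?O2 \<inter> (\<lambda>x. (x, g x)) ` {0..1} = {}"
    using D by fastforce
  have cv: "(\<lambda>x. (x, g x)) ` {0..1} \<subseteq> ?O1 \<union> ?O2"
  proof
    fix p assume "p \<in> (\<lambda>x. (x, g x)) ` {0..1}"
    then obtain x where x: "x \<in> {0..1}" "p = (x, g x)" by auto
    show "p \<in> ?O1 \<union> ?O2"
    proof (cases "g x = y")
      case True
      then have "p \<in> {p. \<bar>fst p - x\<bar> < D x}" using x D by auto
      then show ?thesis using x True by blast
    next
      case False then show ?thesis using x by auto
    qed
  qed
  obtain y1 where y1: "y1 \<in> {0..1}" "y1 < y" using acc[rule_format, of 1] by auto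
  then obtain x1 where x1: "x1 \<in> {0..1}" "g x1 = y1" using surj by (metis imageE)
  have n1: "?O1 \<inter> (\<lambda>x. (x, g x)) ` {0..1} \<noteq> {}"
  proof -
    have "(x1, g x1) \<in> ?O1 \<inter> (\<lambda>x. (x, g x)) ` {0..1}" using x1 y1 by auto
    then show ?thesis by blast
  qed
  obtain x0 where x0: "x0 \<in> {0..1}" "g x0 = y" using surj G by (metis imageE subsetD)
  have n2: "?O2 \<inter> (\<lambda>x. (x, g x)) ` {0..1} \<noteq> {}"
  proof -
    have "(x0, g x0) \<in> {p. \<bar>fst p - x0\<bar> < D x0}" using x0 D by auto
    then have "(x0, g x0) \<in> ?O2 \<inter> (\<lambda>x. (x, g x)) ` {0..1}" using x0 by blast
    then show ?thesis by blast
  qed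
  show False using connectedD[OF conn o1 o2 d cv] n1 n2 by blast
qed

lemma core_above:
  fixes g :: "real \<Rightarrow> real"
  assumes conn: "connected ((\<lambda>x. (x, g x)) ` {0..1})"
    and surj: "g ` {0..1} = {0..1}"
    and G: "G \<subseteq> {0..1}" "y \<in> G"
    and hU: "\<forall>x0\<in>{0..1}. g x0 \<in> G \<longrightarrow> (\<exists>d>0. \<forall>x\<in>{0..1}. \<bar>x-x0\<bar> < d \<and> \<bar>g x - g x0\<bar> < d \<longrightarrow> g x \<in> G)"
    and acc: "\<forall>e>0. \<exists>y'\<in>{0..1}. y < y' \<and> y' < y+e \<and> y' \<notin> G"
  shows False
proof -
  have "\<forall>x0\<in>{0..1} \<inter> g -` {y}. \<exists>d>0. \<forall>x\<in>{0..1}. \<bar>x-x0\<bar> < d \<longrightarrow> g x \<le> y"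
  proof
    fix x0 assume x0: "x0 \<in> {0..1} \<inter> g -` {y}"
    then obtain d where d: "d > 0" "\<forall>x\<in>{0..1}. \<bar>x-x0\<bar> < d \<and> \<bar>g x - g x0\<bar> < d \<longrightarrow> g x \<in> G"
      using hU G by auto
    have "\<forall>x\<in>{0..1}. \<bar>x-x0\<bar> < d \<longrightarrow> g x \<le> y"
    proof (intro ballI impI, rule ccontr)
      fix x assume x: "x \<in> {0..1}" "\<bar>x-x0\<bar> < d" "\<not> g x \<le> y"
      then obtain y' where y': "y' \<in> {0..1}" "y < y'" "y' < y + min d (g x - y)" "y' \<notin> G"
        using acc[rule_format, of "min d (g x - y)"] d by auto
      have "(g x < y' \<and> y' < g x0) \<or> (g x0 < y' \<and> y' < g x)" using x0 y' by auto
      then obtain z where z: "g z = y'" "\<bar>z - x0\<bar> \<le> \<bar>x - x0\<bar>" "\<bar>z - x\<bar> \<le> \<bar>x - x0\<bar>"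
        using darboux2[OF conn x(1), of x0] x0 by auto
      have "z \<in> {0..1}" using z x x0 by auto
      then have "g z \<in> G" using d(2) z x x0 y' by auto
      then show False using z y' by auto
    qed
    then show "\<exists>d>0. \<forall>x\<in>{0..1}. \<bar>x-x0\<bar> < d \<longrightarrow> g x \<le> y" using d by blast
  qed
  then obtain D where D: "\<forall>x0\<in>{0..1} \<inter> g -` {y}. D x0 > 0 \<and> (\<forall>x\<in>{0..1}. \<bar>x-x0\<bar> < D x0 \<longrightarrow> g x \<le> y)"
    by metis
  let ?O1 = "{p::real\<times>real. y < snd p}"
  let ?O2 = "{p::real\<times>real. snd p < y} \<union> (\<Union>x0\<in>{0..1} \<inter> g -` {y}. {p. \<bar>fst p - x0\<bar> < D x0})"
  have o1: "open ?O1" by (intro open_Collect_less continuous_intros)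
  have o2: "open ?O2"
    by (intro open_Un open_UN ballI open_Collect_less continuous_intros)
  have d: "?O1 \<inter> ?O2 \<inter> (\<lambda>x. (x, g x)) ` {0..1} = {}"
    using D by fastforce
  have cv: "(\<lambda>x. (x, g x)) ` {0..1} \<subseteq> ?O1 \<union> ?O2"
  proof
    fix p assume "p \<in> (\<lambda>x. (x, g x)) ` {0..1}"
    then obtain x where x: "x \<in> {0..1}" "p = (x, g x)" by auto
    show "p \<in> ?O1 \<union> ?O2"
    proof (cases "g x = y")
      case True
      then have "p \<in> {p. \<bar>fst p - x\<bar> < D x}" using x D by auto
      then show ?thesis using x True by blast
    next
      case False then show ?thesis using x by auto
    qed
  qed
  obtain y1 where y1: "y1 \<in> {0..1}" "y < y1" using acc[rule_format, of 1] by auto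
  then obtain x1 where x1: "x1 \<in> {0..1}" "g x1 = y1" using surj by (metis imageE)
  have n1: "?O1 \<inter> (\<lambda>x. (x, g x)) ` {0..1} \<noteq> {}"
  proof -
    have "(x1, g x1) \<in> ?O1 \<inter> (\<lambda>x. (x, g x)) ` {0..1}" using x1 y1 by auto
    then show ?thesis by blast
  qed
  obtain x0 where x0: "x0 \<in> {0..1}" "g x0 = y" using surj G by (metis imageE subsetD)
  have n2: "?O2 \<inter> (\<lambda>x. (x, g x)) ` {0..1} \<noteq> {}"
  proof -
    have "(x0, g x0) \<in> {p. \<bar>fst p - x0\<bar> < D x0}" using x0 D by auto
    then have "(x0, g x0) \<in> ?O2 \<inter> (\<lambda>x. (x, g x)) ` {0..1}" using x0 by blast
    then show ?thesis by blast
  qed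
  show False using connectedD[OF conn o1 o2 d cv] n1 n2 by blast
qed


theorem mainTheorem7:
  fixes g :: "real \<Rightarrow> real"
  assumes surj: "g ` {0..1} = {0..1}"
    and conn: "connected ((\<lambda>x. (x, g x)) ` {0..1})"
  shows "continuous_map (top_of_set ((\<lambda>x. (x, g x)) ` {0..1})) (top_of_set {0..1}) snd
       \<and> snd ` ((\<lambda>x. (x, g x)) ` {0..1}) = {0..1}
       \<and> quotient_map (top_of_set ((\<lambda>x. (x, g x)) ` {0..1})) (top_of_set {0..1}) snd"
proof -
  let ?T = "(\<lambda>x. (x, g x)) ` {0..1}"
  have im: "snd ` ?T = {0..1}" using surj by (simp add: image_image)
  have cm: "continuous_map (top_of_set ?T) (top_of_set {0..1}) snd"
    using im by (auto intro!: continuous_intros)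
  have q: "quotient_map (top_of_set ?T) (top_of_set {0..1}) snd"
    unfolding quotient_map_def
  proof (intro conjI allI impI)
    show "snd ` topspace (top_of_set ?T) = topspace (top_of_set {0..1})" using im by simp
  next
    fix U assume U: "U \<subseteq> topspace (top_of_set {0..1::real})"
    then have U01: "U \<subseteq> {0..1}" by simp
    show "openin (top_of_set ?T) {x \<in> topspace (top_of_set ?T). snd x \<in> U} = openin (top_of_set {0..1}) U"
    proof
      assume "openin (top_of_set {0..1}) U"
      then show "openin (top_of_set ?T) {x \<in> topspace (top_of_set ?T). snd x \<in> U}"
        using openin_continuous_map_preimage[OF cm] by blast
    next
      assume op: "openin (top_of_set ?T) {x \<in> topspace (top_of_set ?T). snd x \<in> U}"
      then have op': "\<forall>p\<in>{p \<in> ?T. snd p \<in> U}. \<exists>e>0. \<forall>p'\<in>?T. dist p' p < e \<longrightarrow> p' \<in> {p \<in> ?T. snd p \<in> U}"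
        unfolding openin_euclidean_subtopology_iff by simp
      have hU: "\<forall>x0\<in>{0..1}. g x0 \<in> U \<longrightarrow> (\<exists>d>0. \<forall>x\<in>{0..1}. \<bar>x-x0\<bar> < d \<and> \<bar>g x - g x0\<bar> < d \<longrightarrow> g x \<in> U)"
      proof (intro ballI impI)
        fix x0 assume x0: "x0 \<in> {0..1::real}" "g x0 \<in> U"
        then have "(x0, g x0) \<in> {p \<in> ?T. snd p \<in> U}" by auto
        then obtain e where e: "e > 0" "\<forall>p'\<in>?T. dist p' (x0, g x0) < e \<longrightarrow> p' \<in> {p \<in> ?T. snd p \<in> U}"
          using op' by blast
        have "\<forall>x\<in>{0..1}. \<bar>x-x0\<bar> < e/2 \<and> \<bar>g x - g x0\<bar> < e/2 \<longrightarrow> g x \<in> U"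
        proof (intro ballI impI)
          fix x assume x: "x \<in> {0..1::real}" "\<bar>x-x0\<bar> < e/2 \<and> \<bar>g x - g x0\<bar> < e/2"
          have "dist (x, g x) (x0, g x0) = norm (x - x0, g x - g x0)" by (simp add: dist_norm)
          also have "\<dots> \<le> norm (x - x0) + norm (g x - g x0)" by (rule norm_Pair_le)
          also have "\<dots> < e" using x by simp
          finally have "(x, g x) \<in> {p \<in> ?T. snd p \<in> U}" using e x by auto
          then show "g x \<in> U" by simp
        qed
        then show "\<exists>d>0. \<forall>x\<in>{0..1}. \<bar>x-x0\<bar> < d \<and> \<bar>g x - g x0\<bar> < d \<longrightarrow> g x \<in> U"
          using e(1) half_gt_zero by blast
      qed
      show "openin (top_of_set {0..1}) U"
        unfolding openin_euclidean_subtopology_iff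
      proof (intro conjI ballI)
        show "U \<subseteq> {0..1}" by fact
      next
        fix y assume y: "y \<in> U"
        show "\<exists>e>0. \<forall>x'\<in>{0..1}. dist x' y < e \<longrightarrow> x' \<in> U"
        proof (rule ccontr)
          assume nc: "\<not> ?thesis"
          show False
          proof (cases "\<forall>e>0. \<exists>y'\<in>{0..1}. y-e < y' \<and> y' < y \<and> y' \<notin> U")
            case True
            show False by (rule core_below[OF conn surj U01 y hU True])
          next
            case False
            then obtain e1 where e1: "e1 > 0" "\<forall>y'\<in>{0..1}. y-e1 < y' \<and> y' < y \<longrightarrow> y' \<in> U" by auto
            show False
            proof (cases "\<forall>e>0. \<exists>y'\<in>{0..1}. y < y' \<and> y' < y+e \<and> y' \<notin> U")
              case True
              show False by (rule core_above[OF conn surj U01 y hU True])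
            next
              case False
              then obtain e2 where e2: "e2 > 0" "\<forall>y'\<in>{0..1}. y < y' \<and> y' < y+e2 \<longrightarrow> y' \<in> U" by auto
              have "\<forall>x'\<in>{0..1}. dist x' y < min e1 e2 \<longrightarrow> x' \<in> U"
              proof (intro ballI impI)
                fix x' assume x': "x' \<in> {0..1::real}" "dist x' y < min e1 e2"
                consider "x' < y" | "x' = y" | "y < x'" by linarith
                then show "x' \<in> U"
                  using e1 e2 x' y by (cases; auto simp: dist_real_def)
              qed
              then show False using nc e1 e2 by (meson min_less_iff_conj)
            qed
          qed
        qed
      qed
    qed
  qed
  show ?thesis using cm im q by blast
qed

end
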